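(* There exist constants $\varepsilon>0$ and $C>0$ such that for all positive integers $n$ and all integers $k$ with $\frac{n}{16}\le k\le\frac{n}{4}$, $g_k(n)\le C(2-\varepsilon)^n$.
   Context: $[n]_0=\{0,1,\dots,n\}$, $S_1+S_2=\{u+v:u\in S_1,v\in S_2\}$. For such $k$, $g_k(n)$ is the sum of $2^{-|(S_1+S_2)\cap[n]_0|}$ over all pairs $S_1,S_2\subseteq[n]_0$ with $0\in S_1\cap S_2$, $n+1\notin S_1+S_2$ and $n+1-k\notin S_1+S_2$. *)

theory Defs
  imports Complex_Main
begin

definition sumset :: "nat set \<Rightarrow> nat set \<Rightarrow> nat set" where
  "sumset S1 S2 = {u + v | u v. u \<in> S1 \<and> v \<in> S2}"

definition g :: "nat \<Rightarrow> nat \<Rightarrow> real" where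
  "g k n = (\<Sum>(S1, S2) \<in> {(S1, S2). S1 \<subseteq> {0..n} \<and> S2 \<subseteq> {0..n} \<and> 0 \<in> S1 \<and> 0 \<in> S2
              \<and> n + 1 \<notin> sumset S1 S2 \<and> int n + 1 - int k \<notin> int ` sumset S1 S2}.
            (1/2) ^ card (sumset S1 S2 \<inter> {0..n}))"

end

theory Submission
  imports Defs
begin

definition EE :: "nat \<Rightarrow> nat \<Rightarrow> nat \<Rightarrow> nat \<Rightarrow> bool" where
  "EE n k i j \<longleftrightarrow> i + j = n + 1 \<or> i + j + k = n + 1"

definition wt :: "nat set \<times> nat set \<Rightarrow> real" where
  "wt P = (1/2) ^ card (fst P \<union> snd P)"

definition RS :: "nat \<Rightarrow> nat \<Rightarrow> nat set \<Rightarrow> (nat set \<times> nat set) set" where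
  "RS n k V = {(X,Y). X \<subseteq> V \<and> Y \<subseteq> V \<and> (\<forall>i\<in>X. \<forall>j\<in>Y. \<not> EE n k i j)}"

definition R :: "nat \<Rightarrow> nat \<Rightarrow> nat set \<Rightarrow> real" where
  "R n k V = sum wt (RS n k V)"

lemma wt_nonneg: "0 \<le> wt P" by (simp add: wt_def)

lemma finite_RS: "finite V \<Longrightarrow> finite (RS n k V)"
  by (rule finite_subset[of _ "Pow V \<times> Pow V"]) (auto simp: RS_def)

lemma R_nonneg: "0 \<le> R n k V"
  unfolding R_def by (rule sum_nonneg) (simp add: wt_nonneg)

lemma R_mono: assumes "finite W" "V \<subseteq> W" shows "R n k V \<le> R n k W"
  unfolding R_def
  using assms by (intro sum_mono2 finite_RS) (auto simp: RS_def wt_nonneg)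

lemma R_empty: "R n k {} = 1"
proof -
  have "RS n k {} = {({},{})}" by (auto simp: RS_def)
  then show ?thesis by (simp add: R_def wt_def)
qed

lemma R_triv: assumes "finite V" shows "R n k V \<le> 4 ^ card V"
proof -
  have "R n k V \<le> sum (\<lambda>_. 1) (RS n k V)"
    unfolding R_def by (rule sum_mono) (simp add: wt_def power_le_one)
  also have "\<dots> = card (RS n k V)" by simp
  also have "\<dots> \<le> card (Pow V \<times> Pow V)"
    by (subst of_nat_le_iff, rule card_mono) (auto simp: RS_def assms)
  also have "\<dots> = (4::real) ^ card V"
    using assms by (simp add: card_cartesian_product card_Pow power_mult_distrib[symmetric])
  finally show ?thesis .
qed

lemma R_split:
  assumes fV: "finite V" and fW: "finite W" and d: "V \<inter> W = {}"
  shows "R n k (V \<union> W) \<le> R n k V * R n k W"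
proof -
  define h where "h = (\<lambda>P::nat set \<times> nat set. ((fst P \<inter> V, snd P \<inter> V), (fst P \<inter> W, snd P \<inter> W)))"
  have inj: "inj_on h (RS n k (V \<union> W))"
  proof (rule inj_onI)
    fix P Q assume P: "P \<in> RS n k (V \<union> W)" and Q: "Q \<in> RS n k (V \<union> W)" and e: "h P = h Q"
    obtain X Y where [simp]: "P = (X,Y)" by fastforce
    obtain X' Y' where [simp]: "Q = (X',Y')" by fastforce
    have "X = X \<inter> V \<union> X \<inter> W" "Y = Y \<inter> V \<union> Y \<inter> W" "X' = X' \<inter> V \<union> X' \<inter> W" "Y' = Y' \<inter> V \<union> Y' \<inter> W"
      using P Q by (auto simp: RS_def)
    then show "P = Q" using e by (auto simp: h_def)
  qed
  have img: "h ` RS n k (V \<union> W) \<subseteq> RS n k V \<times> RS n k W"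
    by (auto simp: h_def RS_def)
  have w: "wt P = wt (fst (h P)) * wt (snd (h P))" if "P \<in> RS n k (V \<union> W)" for P
  proof -
    obtain X Y where [simp]: "P = (X,Y)" by fastforce
    have sub: "X \<union> Y \<subseteq> V \<union> W" using that by (auto simp: RS_def)
    have "X \<union> Y = (X \<inter> V \<union> Y \<inter> V) \<union> (X \<inter> W \<union> Y \<inter> W)" using sub by auto
    moreover have "finite (X \<inter> V \<union> Y \<inter> V)" "finite (X \<inter> W \<union> Y \<inter> W)" using fV fW by auto
    moreover have "(X \<inter> V \<union> Y \<inter> V) \<inter> (X \<inter> W \<union> Y \<inter> W) = {}" using d by auto
    ultimately have "card (X \<union> Y) = card (X \<inter> V \<union> Y \<inter> V) + card (X \<inter> W \<union> Y \<inter> W)"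
      by (metis card_Un_disjoint)
    then show ?thesis by (simp add: wt_def h_def power_add)
  qed
  have "R n k (V \<union> W) = sum (\<lambda>Q. wt (fst Q) * wt (snd Q)) (h ` RS n k (V \<union> W))"
    unfolding R_def by (subst sum.reindex[OF inj]) (auto intro!: sum.cong simp: w)
  also have "\<dots> \<le> sum (\<lambda>Q. wt (fst Q) * wt (snd Q)) (RS n k V \<times> RS n k W)"
    by (rule sum_mono2) (use img fV fW in \<open>auto simp: finite_RS wt_nonneg\<close>)
  also have "\<dots> = R n k V * R n k W"
    unfolding R_def by (simp add: sum_product sum.cartesian_product split_beta)
  finally show ?thesis .
qed

lemma R_partition:
  fixes col :: "nat \<Rightarrow> nat" and c :: "nat \<Rightarrow> real"
  assumes fI: "finite I"
  shows "finite U \<Longrightarrow> col ` U \<subseteq> I \<Longrightarrow> (\<And>l. l \<in> I \<Longrightarrow> 0 \<le> c l) \<Longrightarrow>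
    (\<And>l. l \<in> I \<Longrightarrow> R n k {x\<in>U. col x = l} \<le> c l * 2 ^ card {x\<in>U. col x = l}) \<Longrightarrow>
    R n k U \<le> prod c I * 2 ^ card U"
  using fI
proof (induction I arbitrary: U rule: finite_induct)
  case empty
  then show ?case by (simp add: R_empty)
next
  case (insert a I)
  define U1 where "U1 = {x\<in>U. col x = a}"
  define U2 where "U2 = {x\<in>U. col x \<noteq> a}"
  have U: "U = U1 \<union> U2" "U1 \<inter> U2 = {}" by (auto simp: U1_def U2_def)
  have f: "finite U1" "finite U2" using insert.prems(1) by (auto simp: U1_def U2_def)
  have IH: "R n k U2 \<le> prod c I * 2 ^ card U2"
  proof (rule insert.IH)
    show "finite U2" by (rule f)
    show "col ` U2 \<subseteq> I" using insert.prems(2) by (auto simp: U2_def)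
    show "0 \<le> c l" if "l \<in> I" for l using insert.prems(3) that by auto
    fix l assume l: "l \<in> I"
    have "l \<noteq> a" using l insert.hyps by auto
    then have "{x\<in>U2. col x = l} = {x\<in>U. col x = l}" by (auto simp: U2_def)
    then show "R n k {x\<in>U2. col x = l} \<le> c l * 2 ^ card {x\<in>U2. col x = l}"
      using insert.prems(4)[of l] l by simp
  qed
  have A: "R n k U1 \<le> c a * 2 ^ card U1" using insert.prems(4)[of a] by (simp add: U1_def)
  have "R n k U \<le> R n k U1 * R n k U2" using R_split[OF f U(2)] U(1) by simp
  also have "\<dots> \<le> (c a * 2 ^ card U1) * (prod c I * 2 ^ card U2)"
    by (rule mult_mono[OF A IH]) (auto simp: R_nonneg intro!: mult_nonneg_nonneg prod_nonneg insert.prems(3))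
  also have "\<dots> = prod c (insert a I) * 2 ^ card U"
    using insert.hyps f U by (simp add: card_Un_disjoint power_add)
  finally show ?case .
qed

definition PS :: "(nat \<Rightarrow> nat) \<Rightarrow> nat \<Rightarrow> (nat set \<times> nat set) set" where
  "PS p L = {(X,Y). X \<subseteq> p ` {..<L} \<and> Y \<subseteq> p ` {..<L} \<and>
     (\<forall>i. Suc i < L \<longrightarrow> \<not> (p i \<in> X \<and> p (Suc i) \<in> Y) \<and> \<not> (p (Suc i) \<in> X \<and> p i \<in> Y))}"

definition FF :: "(nat \<Rightarrow> nat) \<Rightarrow> nat \<Rightarrow> bool \<Rightarrow> bool \<Rightarrow> real" where
  "FF p L x y = (\<Sum>P\<in>PS p L. if (p (L-1) \<in> fst P) = x \<and> (p (L-1) \<in> snd P) = y then wt P else 0)"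

definition ww :: "bool \<Rightarrow> bool \<Rightarrow> real" where
  "ww x y = (if x \<or> y then 1/2 else 1)"

lemma finite_PS: "finite (PS p L)"
  by (rule finite_subset[of _ "Pow (p ` {..<L}) \<times> Pow (p ` {..<L})"]) (auto simp: PS_def)

lemma FF_step:
  assumes inj: "inj_on p {..<Suc L}"
  shows "FF p (Suc L) x y \<le> ww x y * (\<Sum>x'\<in>UNIV. \<Sum>y'\<in>UNIV.
            if \<not> (x' \<and> y) \<and> \<not> (x \<and> y') then FF p L x' y' else 0)"
proof -
  define st where "st = (\<lambda>P::nat set \<times> nat set. ((p (L-1) \<in> fst P), (p (L-1) \<in> snd P)))"
  define T where "T = {P \<in> PS p L. \<not> (fst (st P) \<and> y) \<and> \<not> (x \<and> snd (st P))}"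
  define f where "f = (\<lambda>P::nat set \<times> nat set. (fst P \<union> (if x then {p L} else {}), snd P \<union> (if y then {p L} else {})))"
  define S where "S = {P\<in>PS p (Suc L). (p L \<in> fst P) = x \<and> (p L \<in> snd P) = y}"
  have pL: "p L \<notin> p ` {..<L}"
  proof
    assume "p L \<in> p ` {..<L}"
    then obtain i where "i < L" "p L = p i" by auto
    then show False using inj unfolding inj_on_def by (metis lessThan_iff less_Suc_eq less_irrefl)
  qed
  have LHS: "FF p (Suc L) x y = sum wt S"
    unfolding FF_def S_def by (simp add: sum.inter_filter[symmetric] finite_PS)
  have sub: "S \<subseteq> f ` T"
  proof
    fix P assume P: "P \<in> S"
    obtain X' Y' where [simp]: "P = (X',Y')" by fastforce
    define X where "X = X' - {p L}"
    define Y where "Y = Y' - {p L}"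
    have X'Y': "X' \<subseteq> p ` {..<Suc L}" "Y' \<subseteq> p ` {..<Suc L}"
      and c: "\<And>i. Suc i < Suc L \<Longrightarrow> \<not> (p i \<in> X' \<and> p (Suc i) \<in> Y') \<and> \<not> (p (Suc i) \<in> X' \<and> p i \<in> Y')"
      and xy: "(p L \<in> X') = x" "(p L \<in> Y') = y"
      using P by (auto simp: S_def PS_def)
    have lessSuc: "p ` {..<Suc L} = insert (p L) (p ` {..<L})" by (simp add: lessThan_Suc)
    have XY: "X \<subseteq> p ` {..<L}" "Y \<subseteq> p ` {..<L}" using X'Y' by (auto simp: X_def Y_def lessSuc)
    have inPS: "(X,Y) \<in> PS p L"
      unfolding PS_def using XY c by (auto simp: X_def Y_def)
    have comp: "\<not> (p (L-1) \<in> X \<and> y) \<and> \<not> (x \<and> p (L-1) \<in> Y)"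
    proof (cases L)
      case 0 then show ?thesis using XY by auto
    next
      case (Suc m)
      have ne: "p m \<noteq> p L" using inj Suc unfolding inj_on_def by (metis lessThan_iff lessI less_SucI n_not_Suc_n)
      have "\<not> (p m \<in> X' \<and> p (Suc m) \<in> Y') \<and> \<not> (p (Suc m) \<in> X' \<and> p m \<in> Y')"
        using c[of m] Suc by simp
      then show ?thesis using Suc xy ne by (auto simp: X_def Y_def)
    qed
    have "(X,Y) \<in> T" using inPS comp by (simp add: T_def st_def)
    moreover have "f (X,Y) = P" using xy X'Y' by (auto simp: f_def X_def Y_def)
    ultimately show "P \<in> f ` T" by (metis image_eqI)
  qed
  have fT: "finite T" using finite_PS by (simp add: T_def)
  have wf: "wt (f P) = ww x y * wt P" if "P \<in> T" for P
  proof -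
    obtain X Y where [simp]: "P = (X,Y)" by fastforce
    have "X \<union> Y \<subseteq> p ` {..<L}" using that by (auto simp: T_def PS_def)
    then have nin: "p L \<notin> X \<union> Y" using pL by auto
    have fin: "finite (X \<union> Y)" using \<open>X \<union> Y \<subseteq> p ` {..<L}\<close> finite_subset by blast
    show ?thesis
    proof (cases "x \<or> y")
      case True
      then have "fst (f P) \<union> snd (f P) = insert (p L) (X \<union> Y)" by (auto simp: f_def)
      then show ?thesis using True nin fin by (simp add: wt_def ww_def)
    next
      case False
      then show ?thesis by (simp add: wt_def ww_def f_def)
    qed
  qed
  have "sum wt S \<le> sum wt (f ` T)"
    by (rule sum_mono2) (use sub fT in \<open>auto simp: wt_nonneg\<close>)
  also have "\<dots> \<le> sum (wt \<circ> f) T"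
    by (rule sum_image_le[OF fT]) (simp add: wt_nonneg)
  also have "\<dots> = ww x y * sum wt T"
    by (simp add: sum_distrib_left wf)
  also have "sum wt T = (\<Sum>P\<in>PS p L. if \<not> (fst (st P) \<and> y) \<and> \<not> (x \<and> snd (st P)) then wt P else 0)"
    unfolding T_def by (simp add: sum.inter_filter[symmetric] finite_PS)
  also have "\<dots> = (\<Sum>x'\<in>UNIV. \<Sum>y'\<in>UNIV.
            if \<not> (x' \<and> y) \<and> \<not> (x \<and> y') then FF p L x' y' else 0)"
  proof -
    have "(\<Sum>x'\<in>UNIV. \<Sum>y'\<in>UNIV. if \<not> (x' \<and> y) \<and> \<not> (x \<and> y') then FF p L x' y' else 0)
       = (\<Sum>x'\<in>UNIV. \<Sum>y'\<in>UNIV. \<Sum>P\<in>PS p L.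
            if \<not> (x' \<and> y) \<and> \<not> (x \<and> y') \<and> st P = (x',y') then wt P else 0)"
      unfolding FF_def st_def by (intro sum.cong refl) (auto simp: sum.neutral)
    also have "\<dots> = (\<Sum>P\<in>PS p L. \<Sum>x'\<in>UNIV. \<Sum>y'\<in>UNIV.
            if \<not> (x' \<and> y) \<and> \<not> (x \<and> y') \<and> st P = (x',y') then wt P else 0)"
      by (simp add: sum.swap[of _ "PS p L"])
    also have "\<dots> = (\<Sum>P\<in>PS p L. if \<not> (fst (st P) \<and> y) \<and> \<not> (x \<and> snd (st P)) then wt P else 0)"
      by (intro sum.cong refl) (auto simp: UNIV_bool st_def)
    finally show ?thesis by simp
  qed
  finally show ?thesis using LHS by (simp add: ww_def)
qed

fun Vt :: "nat \<Rightarrow> real \<times> real \<times> real \<times> real" where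
  "Vt 0 = (1,0,0,0)"
| "Vt (Suc L) = (case Vt L of (a,b,c,d) \<Rightarrow> (a+b+c+d, (a+b)/2, (a+c)/2, a/2))"

definition sel :: "real \<times> real \<times> real \<times> real \<Rightarrow> bool \<Rightarrow> bool \<Rightarrow> real" where
  "sel v x y = (case v of (a,b,c,d) \<Rightarrow> if x then (if y then d else b) else (if y then c else a))"

lemma PS_0: "PS p 0 = {({},{})}" by (auto simp: PS_def)

lemma FF_le: "inj_on p {..<L} \<Longrightarrow> FF p L x y \<le> sel (Vt L) x y"
proof (induction L arbitrary: x y)
  case 0
  then show ?case by (simp add: FF_def PS_0 sel_def wt_def)
next
  case (Suc L)
  have inj: "inj_on p {..<L}" using Suc.prems by (rule inj_on_subset) auto
  obtain a b c d where V: "Vt L = (a,b,c,d)" by (cases "Vt L") auto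
  have IH: "\<And>x y. FF p L x y \<le> sel (Vt L) x y" using Suc.IH[OF inj] .
  have "FF p (Suc L) x y \<le> ww x y * (\<Sum>x'\<in>UNIV. \<Sum>y'\<in>UNIV.
            if \<not> (x' \<and> y) \<and> \<not> (x \<and> y') then FF p L x' y' else 0)"
    by (rule FF_step[OF Suc.prems])
  also have "\<dots> \<le> ww x y * (\<Sum>x'\<in>UNIV. \<Sum>y'\<in>UNIV.
            if \<not> (x' \<and> y) \<and> \<not> (x \<and> y') then sel (Vt L) x' y' else 0)"
    by (intro mult_left_mono sum_mono) (auto simp: ww_def IH)
  also have "\<dots> = sel (Vt (Suc L)) x y"
    by (cases x; cases y) (simp_all add: UNIV_bool V sel_def ww_def)
  finally show ?case .
qed

lemma Vt8: "Vt 8 = (8233/64, 11373/256, 11373/256, 2113/64)"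
  by (simp add: eval_nat_numeral)

lemma Vt_bound:
  assumes "8 \<le> L"
  shows "fst (Vt L) \<le> 1651/1000 * (49/25)^(L-8) * 78 \<and>
         fst (snd (Vt L)) \<le> 1651/1000 * (49/25)^(L-8) * 27 \<and>
         fst (snd (snd (Vt L))) \<le> 1651/1000 * (49/25)^(L-8) * 27 \<and>
         snd (snd (snd (Vt L))) \<le> 1651/1000 * (49/25)^(L-8) * 20"
  using assms
proof (induction L rule: nat_induct_at_least)
  case base
  then show ?case by (simp add: Vt8)
next
  case (Suc m)
  obtain a b c d where V: "Vt m = (a,b,c,d)" by (cases "Vt m") auto
  define K where "K = (1651/1000::real) * (49/25)^(m-8)"
  have K: "0 \<le> K" by (simp add: K_def)
  have h: "a \<le> K * 78" "b \<le> K * 27" "c \<le> K * 27" "d \<le> K * 20"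
    using Suc.IH by (simp_all add: V K_def)
  have e: "(1651/1000::real) * (49/25)^(Suc m - 8) = K * (49/25)"
  proof -
    have "Suc m - 8 = Suc (m - 8)" using Suc.hyps by simp
    then show ?thesis by (simp add: K_def)
  qed
  have g1: "a+b+c+d \<le> K*(49/25)*78" using h K by (simp add: field_simps)
  have g2: "(a+b)/2 \<le> K*(49/25)*27" using h K by (simp add: field_simps)
  have g3: "(a+c)/2 \<le> K*(49/25)*27" using h K by (simp add: field_simps)
  have g4: "a/2 \<le> K*(49/25)*20" using h K by (simp add: field_simps)
  note g = g1 g2 g3 g4
  show ?case unfolding e using g by (simp add: V)
qed

lemma PS_total: "sum wt (PS p L) = (\<Sum>x\<in>UNIV. \<Sum>y\<in>UNIV. FF p L x y)"
proof -
  have "(\<Sum>x\<in>UNIV. \<Sum>y\<in>UNIV. FF p L x y) = (\<Sum>P\<in>PS p L. \<Sum>x\<in>UNIV. \<Sum>y\<in>UNIV.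
        if (p (L-1) \<in> fst P) = x \<and> (p (L-1) \<in> snd P) = y then wt P else 0)"
    unfolding FF_def by (simp add: sum.swap[of _ "PS p L"])
  also have "\<dots> = sum wt (PS p L)"
    by (intro sum.cong refl) (auto simp: UNIV_bool)
  finally show ?thesis by simp
qed

lemma PS_bound:
  assumes inj: "inj_on p {..<L}" and L: "8 \<le> L"
  shows "sum wt (PS p L) \<le> 99/100 * 2 ^ L"
proof -
  obtain a b c d where V: "Vt L = (a,b,c,d)" by (cases "Vt L") auto
  define K where "K = (1651/1000::real) * (49/25)^(L-8)"
  have h: "a \<le> K * 78" "b \<le> K * 27" "c \<le> K * 27" "d \<le> K * 20"
    using Vt_bound[OF L] by (simp_all add: V K_def)
  have "sum wt (PS p L) \<le> (\<Sum>x\<in>UNIV. \<Sum>y\<in>UNIV. sel (Vt L) x y)"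
    unfolding PS_total by (intro sum_mono FF_le[OF inj])
  also have "\<dots> = a + b + c + d" by (simp add: UNIV_bool V sel_def)
  also have "\<dots> \<le> K * 152" using h by simp
  also have "\<dots> \<le> 99/100 * 2 ^ L"
  proof -
    have "(49/25::real)^(L-8) \<le> 2^(L-8)" by (rule power_mono) auto
    then have "K * 152 \<le> 1651/1000 * 152 * 2^(L-8)" by (simp add: K_def)
    also have "\<dots> \<le> 99/100 * 2^(L-8) * 256" by simp
    also have "\<dots> = 99/100 * 2^L"
    proof -
      have "L = (L-8) + 8" using L by simp
      then have "(2::real)^L = 2^(L-8) * 2^8" by (metis power_add)
      then show ?thesis by simp
    qed
    finally show ?thesis .
  qed
  finally show ?thesis .
qed

lemma R_path:
  assumes inj: "inj_on p {..<L}" and L: "8 \<le> L"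
    and edges: "\<And>i. Suc i < L \<Longrightarrow> EE n k (p i) (p (Suc i))"
  shows "R n k (p ` {..<L}) \<le> 99/100 * 2 ^ L"
proof -
  have sym: "EE n k i j \<Longrightarrow> EE n k j i" for i j by (auto simp: EE_def)
  have "RS n k (p ` {..<L}) \<subseteq> PS p L"
    unfolding RS_def PS_def using edges sym
    by (auto simp: lessThan_def) (meson lessThan_iff less_SucI)+
  then have "R n k (p ` {..<L}) \<le> sum wt (PS p L)"
    unfolding R_def by (intro sum_mono2 finite_PS) (auto simp: wt_nonneg)
  also have "\<dots> \<le> 99/100 * 2 ^ L" by (rule PS_bound[OF inj L])
  finally show ?thesis .
qed

lemma mod_sub_mod: fixes a b k :: nat assumes "b \<le> a" shows "(a - b mod k) mod k = (a - b) mod k"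
proof -
  have le: "b mod k \<le> a" using assms by (meson le_trans mod_less_eq_dividend)
  have "int ((a - b mod k) mod k) = (int a - int (b mod k)) mod int k"
    by (simp add: of_nat_mod of_nat_diff[OF le])
  also have "\<dots> = (int a - int b mod int k) mod int k" by (simp add: of_nat_mod)
  also have "\<dots> = (int a - int b) mod int k" by (simp add: mod_diff_right_eq)
  also have "\<dots> = int ((a - b) mod k)" using assms by (simp add: of_nat_mod of_nat_diff)
  finally show ?thesis by simp
qed

definition pp :: "nat \<Rightarrow> nat \<Rightarrow> nat \<Rightarrow> nat" where
  "pp n k r = (n + 1 - r) mod k"

definition lab :: "nat \<Rightarrow> nat \<Rightarrow> nat \<Rightarrow> nat" where
  "lab n k x = (if x = 0 then k else min (x mod k) (pp n k (x mod k)))"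

lemma pp_less: "0 < k \<Longrightarrow> pp n k r < k" by (simp add: pp_def)

lemma pp_pp: assumes "r < k" "k \<le> n" shows "pp n k (pp n k r) = r"
proof -
  have "pp n k (pp n k r) = (n + 1 - (n + 1 - r) mod k) mod k" by (simp add: pp_def)
  also have "\<dots> = (n + 1 - (n + 1 - r)) mod k" using assms by (intro mod_sub_mod) simp
  also have "\<dots> = r" using assms by simp
  finally show ?thesis .
qed

lemma mod_refl: assumes "1 \<le> x" "x \<le> n" shows "(n + 1 - x) mod k = pp n k (x mod k)"
  unfolding pp_def using assms by (subst mod_sub_mod) auto

lemma lab_props:
  assumes "1 \<le> x" "x \<le> n" "0 < k" "k \<le> n"
  shows "lab n k x \<le> pp n k (lab n k x) \<and> (lab n k x = pp n k (lab n k x) \<longrightarrow> x mod k = lab n k x)"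
proof -
  define \<rho> where "\<rho> = x mod k"
  have rk: "\<rho> < k" using assms by (simp add: \<rho>_def)
  show ?thesis
  proof (cases "\<rho> \<le> pp n k \<rho>")
    case True
    then have "lab n k x = \<rho>" using assms by (simp add: lab_def \<rho>_def)
    then show ?thesis using True by (simp add: \<rho>_def)
  next
    case False
    then have "lab n k x = pp n k \<rho>" using assms by (simp add: lab_def \<rho>_def)
    then show ?thesis using False pp_pp[OF rk assms(4)] by simp
  qed
qed

lemma good_fiber_bound:
  assumes k: "0 < k" "4*k \<le> n" and r: "r < k" "r < pp n k r"
  shows "R n k {x\<in>{0..n}. lab n k x = r} \<le> 99/100 * 2 ^ card {x\<in>{0..n}. lab n k x = r}"
proof -
  define s where "s = (if r = 0 then k else r)"
  have s: "1 \<le> s" "s \<le> k" "s mod k = r" using k r by (auto simp: s_def)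
  define J where "J = (n - s) div k"
  define Lr where "Lr = 2 * (J + 1)"
  define pth where "pth = (\<lambda>i. if even i then n + 1 - (s + (i div 2) * k) else s + (i div 2) * k)"
  have kn: "k \<le> n" using k by simp
  have bound: "s + j * k \<le> n" if "j \<le> J" for j
  proof -
    have "j * k \<le> J * k" using that by simp
    also have "\<dots> \<le> n - s" unfolding J_def by (rule div_times_less_eq_dividend)
    finally show ?thesis using s kn by linarith
  qed
  have resodd: "(s + j * k) mod k = r" for j using s by simp
  have reseven: "(n + 1 - (s + j * k)) mod k = pp n k r" if "j \<le> J" for j
    using mod_refl[of "s + j*k" n k] bound[OF that] s resodd[of j] by simp
  have idx: "i div 2 \<le> J" if "i < Lr" for i using that by (simp add: Lr_def)
  have prr: "pp n k (pp n k r) = r" using pp_pp[OF r(1) kn] .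
  have pm: "pth i mod k = (if even i then pp n k r else r)" if "i < Lr" for i
    using reseven[OF idx[OF that]] resodd[of "i div 2"] by (simp add: pth_def)
  have inj: "inj_on pth {..<Lr}"
  proof (rule inj_onI)
    fix i1 i2 assume i1: "i1 \<in> {..<Lr}" and i2: "i2 \<in> {..<Lr}" and e: "pth i1 = pth i2"
    have j1: "i1 div 2 \<le> J" and j2: "i2 div 2 \<le> J" using i1 i2 idx by auto
    have b1: "s + (i1 div 2) * k \<le> n" and b2: "s + (i2 div 2) * k \<le> n" using bound j1 j2 by auto
    show "i1 = i2"
    proof (cases "even i1 = even i2")
      case True
      have "s + (i1 div 2) * k = s + (i2 div 2) * k"
      proof (cases "even i1")
        case True
        then have "n + 1 - (s + (i1 div 2) * k) = n + 1 - (s + (i2 div 2) * k)"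
          using e \<open>even i1 = even i2\<close> by (simp add: pth_def)
        then show ?thesis using b1 b2 by linarith
      next
        case False
        then show ?thesis using e \<open>even i1 = even i2\<close> by (simp add: pth_def)
      qed
      then have "i1 div 2 = i2 div 2" using k by simp
      then show ?thesis using True by (metis dvd_mult_div_cancel odd_two_times_div_two_succ)
    next
      case False
      have "pth i1 mod k = pth i2 mod k" using e by simp
      then have "r = pp n k r"
        using pm[of i1] pm[of i2] i1 i2 False by (auto split: if_splits)
      then show ?thesis using r by simp
    qed
  qed
  have edges: "EE n k (pth i) (pth (Suc i))" if "Suc i < Lr" for i
  proof (cases "even i")
    case True
    have "Suc i div 2 = i div 2" using True by simp
    moreover have "s + (i div 2) * k \<le> n" using bound idx that by simp
    ultimately show ?thesis using True by (simp add: pth_def EE_def)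
  next
    case False
    have d: "Suc i div 2 = Suc (i div 2)" using False by simp
    have "s + (Suc i div 2) * k \<le> n" using bound idx that by simp
    then have "s + (i div 2) * k + k \<le> n" using d by simp
    then show ?thesis using False d by (simp add: pth_def EE_def)
  qed
  have Lr8: "8 \<le> Lr"
  proof -
    have "3 * k \<le> n - s" using k s by linarith
    then have "3 * k div k \<le> (n - s) div k" by (rule div_le_mono)
    then have "3 \<le> J" using k by (simp add: J_def)
    then show ?thesis by (simp add: Lr_def)
  qed
  have repr: "\<exists>j\<le>J. y = s + j * k" if "1 \<le> y" "y \<le> n" "y mod k = r" for y
  proof -
    have ys: "s \<le> y"
    proof (cases "r = 0")
      case True
      then have "k dvd y" using that by auto
      then show ?thesis using True that by (simp add: s_def dvd_imp_le)
    next
      case False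
      have "y mod k \<le> y" by (rule mod_less_eq_dividend)
      then show ?thesis using that False by (simp add: s_def)
    qed
    have "y mod k = s mod k" using that s by simp
    then have "k dvd y - s" using ys by (simp add: mod_eq_dvd_iff_nat)
    then have e: "y = s + ((y - s) div k) * k" using ys by simp
    have "(y - s) div k \<le> J" unfolding J_def using that by (intro div_le_mono) simp
    then show ?thesis using e by blast
  qed
  let ?F = "{x\<in>{0..n}. lab n k x = r}"
  have sub1: "?F \<subseteq> pth ` {..<Lr}"
  proof
    fix x assume x: "x \<in> ?F"
    have x0: "x \<noteq> 0"
    proof
      assume "x = 0"
      then have "lab n k x = k" by (simp add: lab_def)
      then show False using x r by simp
    qed
    then have rx: "r = min (x mod k) (pp n k (x mod k))" using x by (simp add: lab_def)
    show "x \<in> pth ` {..<Lr}"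
    proof (cases "x mod k = r")
      case True
      obtain j where j: "j \<le> J" "x = s + j * k" using repr[of x] x x0 True by auto
      have "2 * j + 1 < Lr" using j by (simp add: Lr_def)
      moreover have "pth (2 * j + 1) = x" using j by (simp add: pth_def)
      ultimately show ?thesis by (metis image_eqI lessThan_iff)
    next
      case False
      then have "r = pp n k (x mod k)" using rx by (metis min_def)
      then have ym: "(n + 1 - x) mod k = r" using mod_refl[of x n k] x x0 by simp
      have "1 \<le> n + 1 - x" "n + 1 - x \<le> n" using x x0 by auto
      then obtain j where j: "j \<le> J" "n + 1 - x = s + j * k" using repr[of "n+1-x"] ym by blast
      have "2 * j < Lr" using j by (simp add: Lr_def)
      moreover have "pth (2 * j) = x"
      proof -
        have "x \<le> n" using x by simp
        then have "n + 1 - (s + j * k) = x" using j(2) by linarith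
        then show ?thesis by (simp add: pth_def)
      qed
      ultimately show ?thesis by (metis image_eqI lessThan_iff)
    qed
  qed
  have sub2: "pth ` {..<Lr} \<subseteq> ?F"
  proof
    fix x assume "x \<in> pth ` {..<Lr}"
    then obtain i where i: "i < Lr" "x = pth i" by auto
    have b: "s + (i div 2) * k \<le> n" using bound idx i by simp
    show "x \<in> ?F"
    proof (cases "even i")
      case True
      have "x mod k = pp n k r" using i True reseven idx by (simp add: pth_def)
      moreover have "1 \<le> x" "x \<le> n" using b i True s by (auto simp: pth_def)
      ultimately show ?thesis using prr r by (simp add: lab_def min_def)
    next
      case False
      have "x mod k = r" using i False resodd by (simp add: pth_def)
      moreover have "1 \<le> x" "x \<le> n" using b i False s by (auto simp: pth_def)
      ultimately show ?thesis using r by (simp add: lab_def min_def)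
    qed
  qed
  have "R n k ?F \<le> R n k (pth ` {..<Lr})" by (rule R_mono[OF _ sub1]) simp
  also have "\<dots> \<le> 99/100 * 2 ^ Lr" by (rule R_path[OF inj Lr8 edges])
  also have "\<dots> \<le> 99/100 * 2 ^ card ?F"
  proof -
    have "Lr = card (pth ` {..<Lr})" using card_image[OF inj] by simp
    also have "\<dots> \<le> card ?F" by (rule card_mono[OF _ sub2]) simp
    finally show ?thesis by simp
  qed
  finally show ?thesis .
qed

lemma g_le_R: assumes "k \<le> n" shows "g k n \<le> R n k {0..n}"
proof -
  define G0 where "G0 = {(S1, S2). S1 \<subseteq> {0..n} \<and> S2 \<subseteq> {0..n} \<and> 0 \<in> S1 \<and> 0 \<in> S2
              \<and> n + 1 \<notin> sumset S1 S2 \<and> int n + 1 - int k \<notin> int ` sumset S1 S2}"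
  have gdef: "g k n = (\<Sum>P\<in>G0. (1/2::real) ^ card (sumset (fst P) (snd P) \<inter> {0..n}))"
    unfolding g_def G0_def by (simp add: split_beta)
  have sub: "G0 \<subseteq> RS n k {0..n}"
  proof
    fix P assume P: "P \<in> G0"
    obtain S1 S2 where [simp]: "P = (S1,S2)" by fastforce
    have h: "S1 \<subseteq> {0..n}" "S2 \<subseteq> {0..n}" "n + 1 \<notin> sumset S1 S2" "int n + 1 - int k \<notin> int ` sumset S1 S2"
      using P by (auto simp: G0_def)
    have "\<not> EE n k i j" if "i \<in> S1" "j \<in> S2" for i j
    proof
      assume "EE n k i j"
      moreover have "i + j \<in> sumset S1 S2" using that by (auto simp: sumset_def)
      ultimately show False
      proof (cases "i + j = n + 1")
        case True then show False using h(3) \<open>i + j \<in> sumset S1 S2\<close> by simp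
      next
        case False
        then have "i + j + k = n + 1" using \<open>EE n k i j\<close> by (simp add: EE_def)
        then have "int (i + j) = int n + 1 - int k" by simp
        then show False using h(4) \<open>i + j \<in> sumset S1 S2\<close> by (metis image_eqI)
      qed
    qed
    then show "P \<in> RS n k {0..n}" using h by (auto simp: RS_def)
  qed
  have le: "(1/2::real) ^ card (sumset (fst P) (snd P) \<inter> {0..n}) \<le> wt P" if "P \<in> G0" for P
  proof -
    obtain S1 S2 where [simp]: "P = (S1,S2)" by fastforce
    have h: "S1 \<subseteq> {0..n}" "S2 \<subseteq> {0..n}" "0 \<in> S1" "0 \<in> S2" using that by (auto simp: G0_def)
    have "S1 \<union> S2 \<subseteq> sumset S1 S2 \<inter> {0..n}"
    proof
      fix x assume "x \<in> S1 \<union> S2"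
      then show "x \<in> sumset S1 S2 \<inter> {0..n}"
        using h unfolding sumset_def by auto (metis add_0_right, metis add_0)
    qed
    then have "card (S1 \<union> S2) \<le> card (sumset S1 S2 \<inter> {0..n})" by (intro card_mono) auto
    then show ?thesis by (simp add: wt_def power_decreasing)
  qed
  have "g k n \<le> sum wt G0" unfolding gdef by (rule sum_mono) (rule le)
  also have "\<dots> \<le> R n k {0..n}" unfolding R_def
    by (rule sum_mono2[OF finite_RS sub]) (auto simp: wt_nonneg)
  finally show ?thesis .
qed

lemma lab_lt: "1 \<le> x \<Longrightarrow> 0 < k \<Longrightarrow> lab n k x < k"
  by (simp add: lab_def min_def pp_less)

lemma FP_card:
  assumes k: "0 < k" "k \<le> n"
  shows "card {l. l < k \<and> pp n k l = l} \<le> 2"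
proof (cases "{l. l < k \<and> pp n k l = l} = {}")
  case True then show ?thesis by (simp only: card.empty)
next
  case False
  let ?FP = "{l. l < k \<and> pp n k l = l}"
  have fin: "finite ?FP" by simp
  define m where "m = Min ?FP"
  have mF: "m \<in> ?FP" using Min_in[OF fin False] by (simp add: m_def)
  have key: "x = m + k div 2" if x: "x \<in> ?FP" "x \<noteq> m" for x
  proof -
    have mx: "m < x" using Min_le[OF fin x(1)] x(2) by (simp add: m_def)
    have xk: "x < k" "m < k" using x mF by auto
    have e1: "(n + 1 - m) mod k = m" and e2: "(n + 1 - x) mod k = x" using x mF by (auto simp: pp_def)
    define q1 where "q1 = (n + 1 - m) div k"
    define q2 where "q2 = (n + 1 - x) div k"
    have a1: "n + 1 - m = q1 * k + m" using e1 unfolding q1_def by (metis div_mult_mod_eq)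
    have a2: "n + 1 - x = q2 * k + x" using e2 unfolding q2_def by (metis div_mult_mod_eq)
    have b: "q1 * k + 2 * m = q2 * k + 2 * x" using a1 a2 xk k by linarith
    then have "q2 * k < q1 * k" using mx by linarith
    then have q: "q2 < q1" by simp
    define d where "d = q1 - q2"
    have "q1 * k = q2 * k + d * k" using q by (simp add: d_def add_mult_distrib[symmetric])
    then have c: "d * k = 2 * (x - m)" using b mx by linarith
    have "d * k < 2 * k" using c xk by linarith
    then have "d < 2" by simp
    moreover have "0 < d" using q by (simp add: d_def)
    ultimately have "d = 1" by simp
    then have "k = 2 * (x - m)" using c by simp
    then have "k div 2 = x - m" by simp
    then show ?thesis using mx by simp
  qed
  have "?FP \<subseteq> {m, m + k div 2}" using key by blast
  then have "card ?FP \<le> card {m, m + k div 2}" by (intro card_mono) auto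
  also have "\<dots> \<le> 2" by (simp add: card_insert_le_m1)
  finally show ?thesis .
qed

lemma good_card:
  assumes k: "0 < k" "k \<le> n"
  shows "k \<le> 2 * card {l. l < k \<and> l < pp n k l} + 2"
proof -
  let ?Gd = "{l. l < k \<and> l < pp n k l}"
  let ?GT = "{l. l < k \<and> pp n k l < l}"
  let ?FP = "{l. l < k \<and> pp n k l = l}"
  have inj: "inj_on (pp n k) ?GT"
    by (rule inj_on_inverseI[of _ "pp n k"]) (simp add: pp_pp k)
  have img: "pp n k ` ?GT \<subseteq> ?Gd" using pp_pp[OF _ k(2)] pp_less[OF k(1)] by auto
  have c1: "card ?GT \<le> card ?Gd" using card_inj_on_le[OF inj img] by simp
  have "{..<k} \<subseteq> ?Gd \<union> ?GT \<union> ?FP" by auto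
  then have "card {..<k} \<le> card (?Gd \<union> ?GT \<union> ?FP)" by (intro card_mono) auto
  also have "\<dots> \<le> card ?Gd + card ?GT + card ?FP" by (meson card_Un_le le_trans add_le_mono order_refl)
  finally show ?thesis using c1 FP_card[OF k] by simp
qed

lemma fixed_fiber:
  assumes k: "0 < k" "k \<le> n" "n \<le> 16 * k" and l: "l < k" "pp n k l = l"
  shows "card {x\<in>{0..n}. lab n k x = l} \<le> 17"
proof -
  let ?F = "{x\<in>{0..n}. lab n k x = l}"
  let ?C = "{x\<in>{1..n}. x mod k = l}"
  have sub: "?F \<subseteq> ?C"
  proof
    fix x assume x: "x \<in> ?F"
    have x0: "x \<noteq> 0"
    proof
      assume "x = 0"
      then have "lab n k x = k" by (simp add: lab_def)
      then show False using x l by simp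
    qed
    then have "x mod k = l" using lab_props[of x n k] x k l by auto
    then show "x \<in> ?C" using x x0 by auto
  qed
  have inj: "inj_on (\<lambda>x. x div k) ?C"
  proof (rule inj_onI)
    fix a b assume "a \<in> ?C" "b \<in> ?C" "a div k = b div k"
    then show "a = b" by (metis (mono_tags, lifting) div_mult_mod_eq mem_Collect_eq)
  qed
  have img: "(\<lambda>x. x div k) ` ?C \<subseteq> {0..n div k}" by (auto intro: div_le_mono)
  have "card ?F \<le> card ?C" by (intro card_mono sub) auto
  also have "\<dots> \<le> card {0..n div k}" using card_inj_on_le[OF inj img] by simp
  also have "\<dots> = n div k + 1" by simp
  also have "\<dots> \<le> 17"
  proof -
    have "n div k \<le> (16 * k) div k" using k by (intro div_le_mono) simp
    then show ?thesis using k by simp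
  qed
  finally show ?thesis .
qed

lemma R_main:
  assumes k: "0 < k" "4*k \<le> n" "n \<le> 16*k"
  shows "R n k {0..n} \<le> (99/100)^(card {l. l<k \<and> l < pp n k l}) * 2^51 * 2^(n+1)"
proof -
  have kn: "k \<le> n" using k by simp
  define good where "good l \<longleftrightarrow> l < k \<and> l < pp n k l" for l
  define bad where "bad l \<longleftrightarrow> l = k \<or> (l < k \<and> pp n k l = l)" for l
  define c :: "nat \<Rightarrow> real" where "c l = (if good l then 99/100 else if bad l then 2^17 else 1)" for l
  let ?fib = "\<lambda>l. {x\<in>{0..n}. lab n k x = l}"
  have "R n k {0..n} \<le> prod c {0..k} * 2 ^ card {0..n}"
  proof (rule R_partition[where col = "lab n k"])
    show "finite {0..k}" "finite {0..n}" by auto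
    show "lab n k ` {0..n} \<subseteq> {0..k}"
    proof
      fix y assume "y \<in> lab n k ` {0..n}"
      then obtain x where "y = lab n k x" by auto
      then show "y \<in> {0..k}" using lab_lt[of x k n] k by (cases "x = 0") (auto simp: lab_def)
    qed
    show "0 \<le> c l" for l by (simp add: c_def)
    fix l assume l: "l \<in> {0..k}"
    show "R n k (?fib l) \<le> c l * 2 ^ card (?fib l)"
    proof (cases "good l")
      case True
      then show ?thesis using good_fiber_bound[OF k(1) k(2)] by (simp add: c_def good_def)
    next
      case ng: False
      show ?thesis
      proof (cases "l = k")
        case True
        have "?fib l = {0}"
        proof (rule set_eqI, rule iffI)
          fix x assume x: "x \<in> ?fib l"
          show "x \<in> {0}"
          proof (rule ccontr)
            assume "x \<notin> {0}"
            then have "1 \<le> x" by simp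
            then show False using lab_lt[of x k n] k x True by simp
          qed
        qed (use True in \<open>auto simp: lab_def\<close>)
        then have "R n k (?fib l) \<le> 4" using R_triv[of "{0}" n k] by simp
        then show ?thesis using True ng \<open>?fib l = {0}\<close> by (simp add: c_def bad_def)
      next
        case False
        then have lk: "l < k" using l by simp
        show ?thesis
        proof (cases "pp n k l = l")
          case True
          have cF: "card (?fib l) \<le> 17" using fixed_fiber[OF k(1) kn k(3) lk True] .
          have "R n k (?fib l) \<le> 4 ^ card (?fib l)" by (rule R_triv) simp
          also have "\<dots> = 2 ^ card (?fib l) * 2 ^ card (?fib l)"
            by (simp add: power_mult_distrib[symmetric])
          also have "\<dots> \<le> 2 ^ 17 * 2 ^ card (?fib l)"
            by (intro mult_right_mono power_increasing cF) auto
          finally show ?thesis using ng lk True by (simp add: c_def bad_def)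
        next
          case False
          have "?fib l = {}"
          proof (rule ccontr)
            assume "?fib l \<noteq> {}"
            then obtain x where x: "x \<in> {0..n}" "lab n k x = l" by auto
            have "x \<noteq> 0"
            proof
              assume "x = 0"
              then have "lab n k x = k" by (simp add: lab_def)
              then show False using x lk by simp
            qed
            then have "l \<le> pp n k l" using lab_props[of x n k] x k kn by auto
            then show False using ng lk False by (auto simp: good_def)
          qed
          moreover have "c l = 1" using ng lk False \<open>l \<noteq> k\<close> by (simp add: c_def bad_def)
          ultimately show ?thesis by (simp only: R_empty card.empty) simp
        qed
      qed
    qed
  qed
  also have "prod c {0..k} \<le> (99/100)^(card {l. l<k \<and> l < pp n k l}) * 2^51"
  proof -
    have "prod c {0..k} = prod (\<lambda>_. 99/100) ({0..k} \<inter> {l. good l}) *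
        prod (\<lambda>l. if bad l then 2^17 else 1) ({0..k} \<inter> - {l. good l})"
      unfolding c_def by (rule prod.If_cases) simp
    also have "prod (\<lambda>l. if bad l then (2::real)^17 else 1) ({0..k} \<inter> - {l. good l})
       = prod (\<lambda>_. 2^17) ({0..k} \<inter> - {l. good l} \<inter> {l. bad l}) * prod (\<lambda>_. 1) ({0..k} \<inter> - {l. good l} \<inter> - {l. bad l})"
      by (rule prod.If_cases) simp
    also have "{0..k} \<inter> {l. good l} = {l. l<k \<and> l < pp n k l}" by (auto simp: good_def)
    finally have e: "prod c {0..k} = (99/100) ^ card {l. l<k \<and> l < pp n k l} *
        (2^17) ^ card ({0..k} \<inter> - {l. good l} \<inter> {l. bad l})" by simp
    have "{0..k} \<inter> - {l. good l} \<inter> {l. bad l} \<subseteq> insert k {l. l < k \<and> pp n k l = l}"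
      by (auto simp: bad_def)
    then have "card ({0..k} \<inter> - {l. good l} \<inter> {l. bad l}) \<le> card (insert k {l. l < k \<and> pp n k l = l})"
      by (intro card_mono) auto
    also have "\<dots> \<le> 3"
    proof -
      have fin: "finite {l. l < k \<and> pp n k l = l}" by simp
      have "card (insert k {l. l < k \<and> pp n k l = l}) \<le> Suc (card {l. l < k \<and> pp n k l = l})"
        using fin by (simp add: card_insert_if)
      then show ?thesis using FP_card[OF k(1) kn] by linarith
    qed
    finally have c3: "card ({0..k} \<inter> - {l. good l} \<inter> {l. bad l}) \<le> 3" .
    have "((2::real)^17) ^ card ({0..k} \<inter> - {l. good l} \<inter> {l. bad l}) \<le> (2^17)^3"
      by (rule power_increasing[OF c3]) simp
    then show ?thesis unfolding e by (intro mult_left_mono) auto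
  qed
  then have "prod c {0..k} * 2 ^ card {0..n} \<le> (99/100)^(card {l. l<k \<and> l < pp n k l}) * 2^51 * 2^(n+1)"
  proof -
    assume a: "prod c {0..k} \<le> (99/100)^(card {l. l<k \<and> l < pp n k l}) * 2^51"
    have cn: "card {0..n} = n + 1" by simp
    show ?thesis unfolding cn by (rule mult_right_mono[OF a]) simp
  qed
  finally show ?thesis .
qed

theorem mainTheorem15:
  shows "\<exists>\<epsilon>::real. \<exists>C::real. \<epsilon> > 0 \<and> C > 0 \<and>
    (\<forall>n::nat. \<forall>k::nat. n > 0 \<and> real n / 16 \<le> real k \<and> real k \<le> real n / 4 \<longrightarrow>
       g k n \<le> C * (2 - \<epsilon>) ^ n)"
proof (intro exI conjI allI impI)
  show "(0::real) < 1/2000" by simp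
  show "(0::real) < 2^53" by simp
  fix n k :: nat
  assume a: "0 < n \<and> real n / 16 \<le> real k \<and> real k \<le> real n / 4"
  have k3: "n \<le> 16 * k" using a by linarith
  have k2: "4 * k \<le> n" using a by linarith
  have k1: "0 < k" using a k3 by linarith
  define G where "G = card {l. l<k \<and> l < pp n k l}"
  have Gk: "k \<le> 2 * G + 2" using good_card[OF k1] k2 by (simp add: G_def)
  define \<gamma> :: real where "\<gamma> = 3999/4000"
  have g0: "0 \<le> \<gamma>" "\<gamma> \<le> 1" by (auto simp: \<gamma>_def)
  have g32: "99/100 \<le> \<gamma> ^ 32"
  proof -
    have "1 + real 32 * (-1/4000) \<le> (1 + (-1/4000::real)) ^ 32"
      by (rule Bernoulli_inequality) simp
    then show ?thesis by (simp add: \<gamma>_def)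
  qed
  have "(99/100::real) ^ G \<le> (\<gamma> ^ 32) ^ G" by (rule power_mono[OF g32]) simp
  also have "\<dots> = \<gamma> ^ (32 * G)" by (simp add: power_mult)
  finally have A: "(99/100::real) ^ G \<le> \<gamma> ^ (32 * G)" .
  have "\<gamma> ^ (32 * G) * \<gamma> ^ 32 = \<gamma> ^ (32 * G + 32)" by (simp add: power_add)
  also have "\<dots> \<le> \<gamma> ^ n" using k3 Gk g0 by (intro power_decreasing) auto
  finally have B: "\<gamma> ^ (32 * G) * \<gamma> ^ 32 \<le> \<gamma> ^ n" .
  have "\<gamma> ^ (32 * G) \<le> 2 * \<gamma> ^ n"
  proof -
    have "\<gamma> ^ (32 * G) * (1/2) \<le> \<gamma> ^ (32 * G) * \<gamma> ^ 32"
      using g32 g0 by (intro mult_left_mono) auto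
    then show ?thesis using B by linarith
  qed
  with A have C: "(99/100::real) ^ G \<le> 2 * \<gamma> ^ n" by linarith
  have "g k n \<le> R n k {0..n}" by (rule g_le_R) (use k2 in simp)
  also have "\<dots> \<le> (99/100)^G * 2^51 * 2^(n+1)" unfolding G_def by (rule R_main[OF k1 k2 k3])
  also have "\<dots> \<le> (2 * \<gamma> ^ n) * 2^51 * 2^(n+1)" using C by (intro mult_right_mono) auto
  also have "\<dots> = 2^53 * (2 * \<gamma>) ^ n" by (simp add: power_add power_mult_distrib)
  also have "2 * \<gamma> = 2 - 1/2000" by (simp add: \<gamma>_def)
  finally show "g k n \<le> 2^53 * (2 - 1/2000) ^ n" .
qed

end
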